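(* Let $G$ be an extremal uniformly $3$-connected graph on $n=3k+\ell\ge 5$ vertices, where $k\in\mathbb{N}\setminus\{1\}$ and $\ell\in\{-1,0,1\}$. Consider a construction of $G$ from complete graphs on four vertices using $j$ bridge operations, $t$ edge joins, $p$ primary spoke operations and $s$ secondary spoke operations. Then: (1) $p=k-1$; (2) if $\ell=-1$, then $j=k-2$ and $t=s=0$; (3) if $\ell=0$, then $j=k-2$, $t=0$, $s=1$; (4) if $\ell=1$, then either $j=k-1$ and $t=s=0$, or $j=k-2$, $t=1$, $s=0$, or $j=k-2$, $t=0$, $s=2$.
   Context: All graphs are finite and simple. A graph on at least $k+1$ vertices is uniformly $k$-connected if each pair of its vertices is connected by $k$ and not more than $k$ independent paths. For a graph $G$, $\nu(G)$ is the number of vertices of $G$ whose degree equals the minimum degree of $G$. Every uniformly $3$-connected graph $G$ on $n$ vertices satisfies $\nu(G)\ge\lceil(2n+2)/3\rceil$; $G$ is called extremal if equality holds. Operations. (1) Edge join: for a graph $H$ and two distinct edges $st, vw\in E(H)$ (which may share one endvertex), form $H + x + y - st - vw + sx + xt + vy + yw + xy$ with new vertices $x,y$; every $3$-regular $3$-connected graph arises from $K_4$ by edge joins, and edge joins are applied to $3$-regular $3$-connected graphs. (2) Bridge operation: for vertex-disjoint graphs $G_1,G_2$ with $v_1\in V(G_1)$, $v_2\in V(G_2)$, $N(v_1)=\{x_1,y_1,z_1\}$, $N(v_2)=\{x_2,y_2,z_2\}$, form $(G_1-v_1)\cup(G_2-v_2)+x_1x_2+y_1y_2+z_1z_2$.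 (3) Spoke operation: for a graph $H$ with distinct vertices $v,w,x$ with $vw\in E(H)$ and $\deg(z)=3$ for all $z\in V(H)\setminus\{x\}$, form $H+y-vw+vy+wy+xy$ with a new vertex $y$; it is primary if $\deg(x)=3$ and secondary if $\deg(x)>3$. It is known that a graph is uniformly $3$-connected if and only if it belongs to the smallest class containing all $3$-regular $3$-connected graphs and closed under bridge operations and spoke operations; thus each uniformly $3$-connected graph can be constructed from copies of $K_4$ by these operations. *)

theory Defs
  imports Complex_Main
begin

type_synonym 'a graph = "'a set \<times> 'a set set"

definition verts :: "'a graph \<Rightarrow> 'a set" where "verts G = fst G"
definition edges :: "'a graph \<Rightarrow> 'a set set" where "edges G = snd G"

definition simple_graph :: "'a graph \<Rightarrow> bool" where
  "simple_graph G \<longleftrightarrow> finite (verts G) \<and>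
     (\<forall>e\<in>edges G. \<exists>a b. a \<noteq> b \<and> a \<in> verts G \<and> b \<in> verts G \<and> e = {a, b})"

definition adj :: "'a graph \<Rightarrow> 'a \<Rightarrow> 'a \<Rightarrow> bool" where
  "adj G a b \<longleftrightarrow> {a, b} \<in> edges G \<and> a \<noteq> b"

definition nbrs :: "'a graph \<Rightarrow> 'a \<Rightarrow> 'a set" where
  "nbrs G v = {u \<in> verts G. adj G v u}"

definition degree :: "'a graph \<Rightarrow> 'a \<Rightarrow> nat" where
  "degree G v = card (nbrs G v)"

definition min_degree :: "'a graph \<Rightarrow> nat" where
  "min_degree G = Min (degree G ` verts G)"

definition nu :: "'a graph \<Rightarrow> nat" where
  "nu G = card {v \<in> verts G. degree G v = min_degree G}"

definition cubic :: "'a graph \<Rightarrow> bool" where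
  "cubic G \<longleftrightarrow> (\<forall>v\<in>verts G. degree G v = 3)"

definition is_path :: "'a graph \<Rightarrow> 'a \<Rightarrow> 'a \<Rightarrow> 'a list \<Rightarrow> bool" where
  "is_path G u v P \<longleftrightarrow> P \<noteq> [] \<and> hd P = u \<and> last P = v \<and> distinct P \<and>
     set P \<subseteq> verts G \<and> (\<forall>i. Suc i < length P \<longrightarrow> adj G (P ! i) (P ! Suc i))"

definition interior :: "'a list \<Rightarrow> 'a set" where
  "interior P = set (butlast (tl P))"

definition indep_paths :: "'a graph \<Rightarrow> 'a \<Rightarrow> 'a \<Rightarrow> 'a list set \<Rightarrow> bool" where
  "indep_paths G u v \<P> \<longleftrightarrow> finite \<P> \<and> (\<forall>P\<in>\<P>. is_path G u v P) \<and>
     (\<forall>P\<in>\<P>. \<forall>Q\<in>\<P>. P \<noteq> Q \<longrightarrow> interior P \<inter> interior Q = {})"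

definition uniformly_connected :: "nat \<Rightarrow> 'a graph \<Rightarrow> bool" where
  "uniformly_connected k G \<longleftrightarrow> card (verts G) \<ge> k + 1 \<and>
     (\<forall>u\<in>verts G. \<forall>v\<in>verts G. u \<noteq> v \<longrightarrow>
        (\<exists>\<P>. indep_paths G u v \<P> \<and> card \<P> = k) \<and>
        (\<forall>\<P>. indep_paths G u v \<P> \<longrightarrow> card \<P> \<le> k))"

definition connected_graph :: "'a graph \<Rightarrow> bool" where
  "connected_graph G \<longleftrightarrow> (\<forall>u\<in>verts G. \<forall>v\<in>verts G. \<exists>P. is_path G u v P)"

definition delete_verts :: "'a graph \<Rightarrow> 'a set \<Rightarrow> 'a graph" where
  "delete_verts G S = (verts G - S, {e \<in> edges G. e \<inter> S = {}})"

definition k_connected :: "nat \<Rightarrow> 'a graph \<Rightarrow> bool" where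
  "k_connected k G \<longleftrightarrow> card (verts G) > k \<and>
     (\<forall>S \<subseteq> verts G. card S < k \<longrightarrow> connected_graph (delete_verts G S))"

definition extremal :: "'a graph \<Rightarrow> bool" where
  "extremal G \<longleftrightarrow> int (nu G) = \<lceil>(2 * real (card (verts G)) + 2) / 3\<rceil>"

definition graph_iso :: "'a graph \<Rightarrow> 'b graph \<Rightarrow> bool" where
  "graph_iso H G \<longleftrightarrow> (\<exists>f. bij_betw f (verts H) (verts G) \<and>
     (\<forall>a\<in>verts H. \<forall>b\<in>verts H. {a, b} \<in> edges H \<longleftrightarrow> {f a, f b} \<in> edges G))"

definition K4 :: "'a set \<Rightarrow> 'a graph" where
  "K4 A = (A, {{a, b} | a b. a \<in> A \<and> b \<in> A \<and> a \<noteq> b})"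

definition edge_join :: "'a graph \<Rightarrow> 'a \<Rightarrow> 'a \<Rightarrow> 'a \<Rightarrow> 'a \<Rightarrow> 'a \<Rightarrow> 'a \<Rightarrow> 'a graph" where
  "edge_join H s t v w x y =
     (verts H \<union> {x, y},
      (edges H - {{s, t}, {v, w}}) \<union> {{s, x}, {x, t}, {v, y}, {y, w}, {x, y}})"

definition bridge_op :: "'a graph \<Rightarrow> 'a \<Rightarrow> 'a \<Rightarrow> 'a \<Rightarrow> 'a \<Rightarrow>
                         'a graph \<Rightarrow> 'a \<Rightarrow> 'a \<Rightarrow> 'a \<Rightarrow> 'a \<Rightarrow> 'a graph" where
  "bridge_op G1 v1 x1 y1 z1 G2 v2 x2 y2 z2 =
     ((verts G1 - {v1}) \<union> (verts G2 - {v2}),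
      {e \<in> edges G1. v1 \<notin> e} \<union> {e \<in> edges G2. v2 \<notin> e} \<union> {{x1, x2}, {y1, y2}, {z1, z2}})"

definition spoke_op :: "'a graph \<Rightarrow> 'a \<Rightarrow> 'a \<Rightarrow> 'a \<Rightarrow> 'a \<Rightarrow> 'a graph" where
  "spoke_op H v w x y =
     (verts H \<union> {y}, (edges H - {{v, w}}) \<union> {{v, y}, {w, y}, {x, y}})"

inductive constr :: "nat graph \<Rightarrow> nat \<Rightarrow> nat \<Rightarrow> nat \<Rightarrow> nat \<Rightarrow> bool" where
  base: "card A = 4 \<Longrightarrow> constr (K4 A) 0 0 0 0"
| join: "\<lbrakk> constr H j t p s; cubic H; k_connected 3 H;
           {a, b} \<in> edges H; {c, d} \<in> edges H; {a, b} \<noteq> {c, d};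
           x \<notin> verts H; y \<notin> verts H; x \<noteq> y \<rbrakk>
         \<Longrightarrow> constr (edge_join H a b c d x y) j (Suc t) p s"
| bridge: "\<lbrakk> constr G1 j1 t1 p1 s1; constr G2 j2 t2 p2 s2;
             verts G1 \<inter> verts G2 = {};
             v1 \<in> verts G1; nbrs G1 v1 = {x1, y1, z1}; card {x1, y1, z1} = 3;
             v2 \<in> verts G2; nbrs G2 v2 = {x2, y2, z2}; card {x2, y2, z2} = 3 \<rbrakk>
         \<Longrightarrow> constr (bridge_op G1 v1 x1 y1 z1 G2 v2 x2 y2 z2)
               (Suc (j1 + j2)) (t1 + t2) (p1 + p2) (s1 + s2)"
| spoke_primary: "\<lbrakk> constr H j t p s; v \<in> verts H; w \<in> verts H; x \<in> verts H;
             v \<noteq> w; v \<noteq> x; w \<noteq> x; {v, w} \<in> edges H;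
             \<forall>z\<in>verts H - {x}. degree H z = 3; degree H x = 3; y \<notin> verts H \<rbrakk>
         \<Longrightarrow> constr (spoke_op H v w x y) j t (Suc p) s"
| spoke_secondary: "\<lbrakk> constr H j t p s; v \<in> verts H; w \<in> verts H; x \<in> verts H;
             v \<noteq> w; v \<noteq> x; w \<noteq> x; {v, w} \<in> edges H;
             \<forall>z\<in>verts H - {x}. degree H z = 3; degree H x > 3; y \<notin> verts H \<rbrakk>
         \<Longrightarrow> constr (spoke_op H v w x y) j t p (Suc s)"

end

theory Submission
  imports Defs
begin


lemma verts_pair[simp]: "verts (A, B) = A" by (simp add: verts_def)
lemma edges_pair[simp]: "edges (A, B) = B" by (simp add: edges_def)

lemma edge_in:
  assumes "simple_graph G" "{a, b} \<in> edges G"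
  shows "a \<in> verts G" "b \<in> verts G" "a \<noteq> b"
  using assms unfolding simple_graph_def by (auto simp: doubleton_eq_iff) 

lemma finite_nbrs: "simple_graph G \<Longrightarrow> finite (nbrs G u)"
  unfolding simple_graph_def nbrs_def by auto

lemma nbrs_out: "simple_graph G \<Longrightarrow> u \<notin> verts G \<Longrightarrow> nbrs G u = {}"
  unfolding nbrs_def adj_def by (auto dest: edge_in)

lemma spoke_facts:
  assumes sg: "simple_graph H" and V: "v \<in> verts H" "w \<in> verts H" "x \<in> verts H"
    and d: "v \<noteq> w" "v \<noteq> x" "w \<noteq> x" and e: "{v, w} \<in> edges H" and y: "y \<notin> verts H"
  shows "simple_graph (spoke_op H v w x y)"
    and "degree (spoke_op H v w x y) y = 3"
    and "u \<in> verts H \<Longrightarrow> degree (spoke_op H v w x y) u = degree H u + (if u = x then 1 else 0)"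
proof -
  show "simple_graph (spoke_op H v w x y)"
  proof -
    have f: "finite (verts H)" using sg simple_graph_def by blast
    have "\<exists>a b. a \<noteq> b \<and> a \<in> verts H \<union> {y} \<and> b \<in> verts H \<union> {y} \<and> e = {a, b}"
      if "e \<in> edges H - {{v, w}} \<union> {{v, y}, {w, y}, {x, y}}" for e
    proof -
      from that consider "e \<in> edges H" | "e = {v, y}" | "e = {w, y}" | "e = {x, y}" by blast
      then show ?thesis
      proof cases
        case 1 then show ?thesis using sg unfolding simple_graph_def by blast
      next
        case 2 then show ?thesis using V y by (intro exI[of _ v] exI[of _ y]) auto
      next
        case 3 then show ?thesis using V y by (intro exI[of _ w] exI[of _ y]) auto
      next
        case 4 then show ?thesis using V y by (intro exI[of _ x] exI[of _ y]) auto
      qed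
    qed
    then show ?thesis using f unfolding simple_graph_def spoke_op_def by simp
  qed
  have "nbrs (spoke_op H v w x y) y = {v, w, x}"
    using V y d edge_in[OF sg] unfolding nbrs_def adj_def spoke_op_def by (auto simp: doubleton_eq_iff)
  then show "degree (spoke_op H v w x y) y = 3" using d unfolding degree_def by simp
  assume u: "u \<in> verts H"
  have yn: "y \<notin> nbrs H u" using y unfolding nbrs_def by auto
  have wn: "w \<in> nbrs H v" "v \<in> nbrs H w" using e V d unfolding nbrs_def adj_def by (auto simp: insert_commute)
  have fin: "finite (nbrs H u)" using finite_nbrs[OF sg] .
  have cp: "card (nbrs H v) > 0" "card (nbrs H w) > 0" using wn finite_nbrs[OF sg] card_gt_0_iff by blast+
  have "nbrs (spoke_op H v w x y) u = (if u = v then insert y (nbrs H u - {w}) else if u = w then insert y (nbrs H u - {v})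
     else if u = x then insert y (nbrs H u) else nbrs H u)"
    using u V y d edge_in[OF sg] unfolding nbrs_def adj_def spoke_op_def by (auto simp: doubleton_eq_iff)
  then show "degree (spoke_op H v w x y) u = degree H u + (if u = x then 1 else 0)"
    unfolding degree_def using yn wn fin d cp
    by (auto simp: card_insert_if card_Diff_singleton_if)
qed

lemma join_facts:
  assumes sg: "simple_graph H" and cub: "cubic H"
    and e: "{a, b} \<in> edges H" "{c, d} \<in> edges H" "{a, b} \<noteq> {c, d}"
    and xy: "x \<notin> verts H" "y \<notin> verts H" "x \<noteq> y"
  shows "simple_graph (edge_join H a b c d x y)" and "cubic (edge_join H a b c d x y)"
proof -
  have V: "a \<in> verts H" "b \<in> verts H" "c \<in> verts H" "d \<in> verts H" "a \<noteq> b" "c \<noteq> d"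
    using edge_in[OF sg e(1)] edge_in[OF sg e(2)] by auto
  show "simple_graph (edge_join H a b c d x y)"
  proof -
    have f: "finite (verts H)" using sg simple_graph_def by blast
    have "\<exists>p q. p \<noteq> q \<and> p \<in> verts H \<union> {x, y} \<and> q \<in> verts H \<union> {x, y} \<and> f = {p, q}"
      if "f \<in> (edges H - {{a, b}, {c, d}}) \<union> {{a, x}, {x, b}, {c, y}, {y, d}, {x, y}}" for f
    proof -
      from that consider "f \<in> edges H" | "f = {a, x}" | "f = {x, b}" | "f = {c, y}" | "f = {y, d}" | "f = {x, y}" by blast
      then show ?thesis
      proof cases
        case 1 then show ?thesis using sg unfolding simple_graph_def by blast
      next
        case 2 then show ?thesis using V xy by (intro exI[of _ a] exI[of _ x]) auto
      next
        case 3 then show ?thesis using V xy by (intro exI[of _ x] exI[of _ b]) auto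
      next
        case 4 then show ?thesis using V xy by (intro exI[of _ c] exI[of _ y]) auto
      next
        case 5 then show ?thesis using V xy by (intro exI[of _ y] exI[of _ d]) auto
      next
        case 6 then show ?thesis using V xy by (intro exI[of _ x] exI[of _ y]) auto
      qed
    qed
    then show ?thesis using f unfolding simple_graph_def edge_join_def by simp
  qed
  have "degree (edge_join H a b c d x y) u = 3" if u: "u \<in> verts (edge_join H a b c d x y)" for u
  proof -
    consider "u = x" | "u = y" | "u \<in> verts H" using u unfolding edge_join_def by auto
    then show ?thesis
    proof cases
      case 1
      have "nbrs (edge_join H a b c d x y) u = {a, b, y}"
        using 1 V xy edge_in[OF sg] unfolding nbrs_def adj_def edge_join_def by (auto simp: doubleton_eq_iff)
      moreover have "a \<noteq> y" "b \<noteq> y" using V xy by auto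
      ultimately show ?thesis unfolding degree_def using V xy 1 by auto
    next
      case 2
      have "nbrs (edge_join H a b c d x y) u = {c, d, x}"
        using 2 V xy edge_in[OF sg] unfolding nbrs_def adj_def edge_join_def by (auto simp: doubleton_eq_iff)
      moreover have "c \<noteq> x" "d \<noteq> x" using V xy by auto
      ultimately show ?thesis unfolding degree_def using V xy 2 by auto
    next
      case 3
      define R where "R = (if u = a then {b} else {}) \<union> (if u = b then {a} else {}) \<union>
         (if u = c then {d} else {}) \<union> (if u = d then {c} else {})"
      define A where "A = (if u = a \<or> u = b then {x} else {}) \<union> (if u = c \<or> u = d then {y} else {})"
      have N: "nbrs (edge_join H a b c d x y) u = (nbrs H u - R) \<union> A"
        using 3 V xy edge_in[OF sg] unfolding nbrs_def adj_def edge_join_def R_def A_def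
        by (auto simp: doubleton_eq_iff insert_commute split: if_splits)
      have RA: "card R = card A"
        using V xy e(3) unfolding R_def A_def by (auto simp: doubleton_eq_iff)
      have Rs: "R \<subseteq> nbrs H u"
        using V e 3 unfolding R_def nbrs_def adj_def by (auto simp: insert_commute)
      have Ad: "A \<inter> nbrs H u = {}" using xy unfolding A_def nbrs_def by auto
      have fA: "finite A" "finite R" unfolding A_def R_def by auto
      have fn: "finite (nbrs H u)" using finite_nbrs[OF sg] .
      have d3: "card (nbrs H u) = 3" using cub 3 unfolding cubic_def degree_def by auto
      have "card ((nbrs H u - R) \<union> A) = card (nbrs H u - R) + card A"
        using Ad fA fn by (intro card_Un_disjoint) auto
      also have "card (nbrs H u - R) = card (nbrs H u) - card R"
        using Rs fA by (simp add: card_Diff_subset)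
      finally show ?thesis unfolding degree_def N using RA d3 card_mono[OF fn Rs] by simp
    qed
  qed
  then show "cubic (edge_join H a b c d x y)" unfolding cubic_def by blast
qed

lemma bridge_sym: "bridge_op G1 v1 x1 y1 z1 G2 v2 x2 y2 z2 = bridge_op G2 v2 x2 y2 z2 G1 v1 x1 y1 z1"
  unfolding bridge_op_def by (auto simp: insert_commute)

lemma nbrs_in: "z \<in> nbrs G u \<Longrightarrow> z \<in> verts G \<and> z \<noteq> u \<and> {u, z} \<in> edges G"
  unfolding nbrs_def adj_def by auto

lemma bridge_deg:
  assumes sg1: "simple_graph G1" and sg2: "simple_graph G2" and dj: "verts G1 \<inter> verts G2 = {}"
    and v1: "v1 \<in> verts G1" and n1: "nbrs G1 v1 = {x1, y1, z1}" and c1: "card {x1, y1, z1} = 3"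
    and v2: "v2 \<in> verts G2" and n2: "nbrs G2 v2 = {x2, y2, z2}" and c2: "card {x2, y2, z2} = 3"
    and u: "u \<in> verts G1" "u \<noteq> v1"
  shows "degree (bridge_op G1 v1 x1 y1 z1 G2 v2 x2 y2 z2) u = degree G1 u"
proof -
  have X1: "x1 \<in> verts G1" "y1 \<in> verts G1" "z1 \<in> verts G1" "x1 \<noteq> v1" "y1 \<noteq> v1" "z1 \<noteq> v1"
    using n1 nbrs_in[of _ G1 v1] by auto
  have X2: "x2 \<in> verts G2" "y2 \<in> verts G2" "z2 \<in> verts G2" "x2 \<noteq> v2" "y2 \<noteq> v2" "z2 \<noteq> v2"
    using n2 nbrs_in[of _ G2 v2] by auto
  have D1: "x1 \<noteq> y1" "x1 \<noteq> z1" "y1 \<noteq> z1" using c1 by (auto simp: card_insert_if split: if_splits)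
  define A where "A = (if u = x1 then {x2} else {}) \<union> (if u = y1 then {y2} else {}) \<union> (if u = z1 then {z2} else {})"
  have N: "nbrs (bridge_op G1 v1 x1 y1 z1 G2 v2 x2 y2 z2) u = (nbrs G1 u - {v1}) \<union> A"
    using u X1 X2 dj edge_in[OF sg1] edge_in[OF sg2] unfolding nbrs_def adj_def bridge_op_def A_def
    by (auto simp: doubleton_eq_iff split: if_splits)
  have vin: "v1 \<in> nbrs G1 u \<longleftrightarrow> u \<in> {x1, y1, z1}"
    using n1 u v1 unfolding nbrs_def adj_def by (auto simp: insert_commute)
  have cA: "card A = (if u \<in> {x1, y1, z1} then 1 else 0)"
    using D1 unfolding A_def by auto
  have Ad: "A \<inter> nbrs G1 u = {}" using X2 dj nbrs_in[of _ G1 u] unfolding A_def by auto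
  have fA: "finite A" unfolding A_def by auto
  have fn: "finite (nbrs G1 u)" using finite_nbrs[OF sg1] .
  have "card ((nbrs G1 u - {v1}) \<union> A) = card (nbrs G1 u - {v1}) + card A"
    using Ad fA fn by (intro card_Un_disjoint) auto
  moreover have "card (nbrs G1 u) > 0" if "v1 \<in> nbrs G1 u" using that fn card_gt_0_iff by blast
  ultimately show ?thesis unfolding degree_def N using vin cA
    by (auto simp: card_Diff_singleton_if)
qed

lemma bridge_simple:
  assumes sg1: "simple_graph G1" and sg2: "simple_graph G2" and dj: "verts G1 \<inter> verts G2 = {}"
    and v1: "v1 \<in> verts G1" and n1: "nbrs G1 v1 = {x1, y1, z1}"
    and v2: "v2 \<in> verts G2" and n2: "nbrs G2 v2 = {x2, y2, z2}"
  shows "simple_graph (bridge_op G1 v1 x1 y1 z1 G2 v2 x2 y2 z2)"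
proof -
  have X1: "x1 \<in> verts G1" "y1 \<in> verts G1" "z1 \<in> verts G1" "x1 \<noteq> v1" "y1 \<noteq> v1" "z1 \<noteq> v1"
    using n1 nbrs_in[of _ G1 v1] by auto
  have X2: "x2 \<in> verts G2" "y2 \<in> verts G2" "z2 \<in> verts G2" "x2 \<noteq> v2" "y2 \<noteq> v2" "z2 \<noteq> v2"
    using n2 nbrs_in[of _ G2 v2] by auto
  let ?V = "(verts G1 - {v1}) \<union> (verts G2 - {v2})"
  have f: "finite ?V" using sg1 sg2 simple_graph_def by blast
  have "\<exists>p q. p \<noteq> q \<and> p \<in> ?V \<and> q \<in> ?V \<and> f = {p, q}"
    if "f \<in> {e \<in> edges G1. v1 \<notin> e} \<union> {e \<in> edges G2. v2 \<notin> e} \<union> {{x1, x2}, {y1, y2}, {z1, z2}}" for f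
  proof -
    from that consider "f \<in> edges G1" "v1 \<notin> f" | "f \<in> edges G2" "v2 \<notin> f" | "f = {x1, x2}" | "f = {y1, y2}" | "f = {z1, z2}" by blast
    then show ?thesis
    proof cases
      case 1 then show ?thesis using sg1 unfolding simple_graph_def by fastforce
    next
      case 2 then show ?thesis using sg2 unfolding simple_graph_def by fastforce
    next
      case 3 then show ?thesis using X1 X2 dj by (intro exI[of _ x1] exI[of _ x2]) auto
    next
      case 4 then show ?thesis using X1 X2 dj by (intro exI[of _ y1] exI[of _ y2]) auto
    next
      case 5 then show ?thesis using X1 X2 dj by (intro exI[of _ z1] exI[of _ z2]) auto
    qed
  qed
  then show ?thesis using f unfolding simple_graph_def bridge_op_def by simp
qed

definition high :: "'a graph \<Rightarrow> 'a set" where "high G = {v \<in> verts G. degree G v \<noteq> 3}"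

lemma K4_facts:
  assumes "card A = 4"
  shows "simple_graph (K4 A)" "\<forall>v\<in>verts (K4 A). degree (K4 A) v = 3"
proof -
  have fA: "finite A" using assms card.infinite by fastforce
  show "simple_graph (K4 A)" using fA unfolding simple_graph_def K4_def by auto
  have "nbrs (K4 A) v = A - {v}" if "v \<in> A" for v
    using that unfolding nbrs_def adj_def K4_def by (auto simp: doubleton_eq_iff)
  then show "\<forall>v\<in>verts (K4 A). degree (K4 A) v = 3" unfolding degree_def using assms fA
    by (simp add: K4_def)
qed

lemma inv:
  "constr H j t p s \<Longrightarrow> simple_graph H \<and> card (verts H) = 2*j+4+2*t+p+s \<and>
     (\<forall>v\<in>verts H. degree H v \<ge> 3) \<and> card (high H) = p \<and> p \<le> j+1"
proof (induction rule: constr.induct)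
  case (base A)
  have "high (K4 A) = {}" using K4_facts(2)[OF base] unfolding high_def by auto
  then show ?case using K4_facts[OF base] base by (simp add: K4_def)
next
  case (join H j t p s a b c d x y)
  have sg: "simple_graph H" using join by blast
  have h0: "high H = {}" using join.hyps(2) unfolding cubic_def high_def by auto
  have "card (verts (edge_join H a b c d x y)) = card (verts H) + 2"
    using join sg unfolding edge_join_def simple_graph_def by (auto simp: card_insert_if)
  moreover have "high (edge_join H a b c d x y) = {}"
    using join_facts[OF sg join.hyps(2,4,5,6,7,8,9)] unfolding cubic_def high_def by auto
  ultimately show ?case using join join_facts[OF sg join.hyps(2,4,5,6,7,8,9)] h0
    unfolding cubic_def by auto
next
  case (bridge G1 j1 t1 p1 s1 G2 j2 t2 p2 s2 v1 x1 y1 z1 v2 x2 y2 z2)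
  let ?G = "bridge_op G1 v1 x1 y1 z1 G2 v2 x2 y2 z2"
  have sg1: "simple_graph G1" and sg2: "simple_graph G2" using bridge by blast+
  have d1: "\<And>u. u \<in> verts G1 \<Longrightarrow> u \<noteq> v1 \<Longrightarrow> degree ?G u = degree G1 u"
    using bridge_deg[OF sg1 sg2 bridge.hyps(3-9)] by blast
  have d2: "\<And>u. u \<in> verts G2 \<Longrightarrow> u \<noteq> v2 \<Longrightarrow> degree ?G u = degree G2 u"
    using bridge_deg[OF sg2 sg1 _ bridge.hyps(7,8,9,4,5,6)] bridge.hyps(3) bridge_sym by (metis inf_commute)
  have dv1: "degree G1 v1 = 3" using bridge.hyps(5,6) unfolding degree_def by simp
  have dv2: "degree G2 v2 = 3" using bridge.hyps(8,9) unfolding degree_def by simp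
  have VG: "verts ?G = (verts G1 - {v1}) \<union> (verts G2 - {v2})" unfolding bridge_op_def by simp
  have f1: "finite (verts G1)" and f2: "finite (verts G2)" using sg1 sg2 simple_graph_def by blast+
  have "card (verts ?G) = card (verts G1 - {v1}) + card (verts G2 - {v2})"
    unfolding VG using f1 f2 bridge.hyps(3) by (intro card_Un_disjoint) auto
  also have "\<dots> = card (verts G1) - 1 + (card (verts G2) - 1)" using bridge.hyps(4,7) f1 f2 by simp
  finally have cV: "card (verts ?G) = card (verts G1) - 1 + (card (verts G2) - 1)" .
  have hG: "high ?G = high G1 \<union> high G2"
    unfolding high_def VG using d1 d2 dv1 dv2 bridge.hyps(4,7) by (auto; metis)
  have "card (high ?G) = card (high G1) + card (high G2)"
    unfolding hG using f1 f2 bridge.hyps(3) unfolding high_def by (intro card_Un_disjoint) auto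
  moreover have "\<forall>v\<in>verts ?G. degree ?G v \<ge> 3" using d1 d2 bridge.IH unfolding VG by (auto; metis)
  moreover have "simple_graph ?G" using bridge_simple[OF sg1 sg2 bridge.hyps(3,4,5,7,8)] .
  ultimately show ?case using cV bridge.IH by auto
next
  case (spoke_primary H j t p s v w x y)
  have sg: "simple_graph H" using spoke_primary by blast
  note F = spoke_facts[OF sg spoke_primary.hyps(2-8,11)]
  have all3: "\<forall>z\<in>verts H. degree H z = 3" using spoke_primary.hyps(9,10) by blast
  have h0: "high H = {}" using all3 unfolding high_def by auto
  have fV: "finite (verts H)" using sg simple_graph_def by blast
  have VG: "verts (spoke_op H v w x y) = insert y (verts H)" unfolding spoke_op_def by simp
  have "high (spoke_op H v w x y) = {x}"
    unfolding high_def VG using F(2) F(3) all3 spoke_primary.hyps(4) by (auto split: if_splits)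
  moreover have "card (verts (spoke_op H v w x y)) = card (verts H) + 1"
    unfolding VG using fV spoke_primary.hyps(11) by simp
  moreover have "\<forall>z\<in>verts (spoke_op H v w x y). degree (spoke_op H v w x y) z \<ge> 3"
    unfolding VG using F(2) F(3) all3 by auto
  ultimately show ?case using F(1) spoke_primary.IH h0 by auto
next
  case (spoke_secondary H j t p s v w x y)
  have sg: "simple_graph H" using spoke_secondary by blast
  note F = spoke_facts[OF sg spoke_secondary.hyps(2-8,11)]
  have h1: "high H = {x}" using spoke_secondary.hyps(4,9,10) unfolding high_def by auto
  have fV: "finite (verts H)" using sg simple_graph_def by blast
  have VG: "verts (spoke_op H v w x y) = insert y (verts H)" unfolding spoke_op_def by simp
  have "high (spoke_op H v w x y) = {x}"
    unfolding high_def VG using F(2) F(3) spoke_secondary.hyps(4,9,10) by (auto split: if_splits)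
  moreover have "card (verts (spoke_op H v w x y)) = card (verts H) + 1"
    unfolding VG using fV spoke_secondary.hyps(11) by simp
  moreover have "\<forall>z\<in>verts (spoke_op H v w x y). degree (spoke_op H v w x y) z \<ge> 3"
    unfolding VG using F(2) F(3) spoke_secondary.IH by auto
  ultimately show ?case using F(1) spoke_secondary.IH h1 by auto
qed



lemma iso_nu:
  assumes iso: "graph_iso H G"
  shows "nu G = nu H \<and> card (verts G) = card (verts H)"
proof -
  obtain f where bij: "bij_betw f (verts H) (verts G)"
    and ed: "\<forall>a\<in>verts H. \<forall>b\<in>verts H. {a, b} \<in> edges H \<longleftrightarrow> {f a, f b} \<in> edges G"
    using iso unfolding graph_iso_def by blast
  have inj: "inj_on f (verts H)" and im: "f ` verts H = verts G" using bij_betw_imp_inj_on[OF bij] bij_betw_imp_surj_on[OF bij] by auto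
  have nb: "nbrs G (f a) = f ` nbrs H a" if a: "a \<in> verts H" for a
  proof
    show "f ` nbrs H a \<subseteq> nbrs G (f a)"
    proof
      fix z assume "z \<in> f ` nbrs H a"
      then obtain b where b: "b \<in> nbrs H a" "z = f b" by blast
      then have "b \<in> verts H" "{a, b} \<in> edges H" "a \<noteq> b" unfolding nbrs_def adj_def by auto
      then have "f b \<in> verts G" "{f a, f b} \<in> edges G" "f a \<noteq> f b"
        using a ed im inj_onD[OF inj, of a b] by auto
      then show "z \<in> nbrs G (f a)" using b unfolding nbrs_def adj_def by simp
    qed
    show "nbrs G (f a) \<subseteq> f ` nbrs H a"
    proof
      fix z assume z: "z \<in> nbrs G (f a)"
      then have "z \<in> verts G" unfolding nbrs_def by auto
      then obtain b where b: "b \<in> verts H" "z = f b" using im by blast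
      then have "{f a, f b} \<in> edges G" "f a \<noteq> f b" using z unfolding nbrs_def adj_def by auto
      then have "{a, b} \<in> edges H" "a \<noteq> b" using ed a b by auto
      then show "z \<in> f ` nbrs H a" using b unfolding nbrs_def adj_def by auto
    qed
  qed
  have dg: "degree G (f a) = degree H a" if a: "a \<in> verts H" for a
  proof -
    have "nbrs H a \<subseteq> verts H" unfolding nbrs_def by auto
    then have "inj_on f (nbrs H a)" by (rule inj_on_subset[OF inj])
    then show ?thesis unfolding degree_def nb[OF a] by (simp add: card_image)
  qed
  have "degree G ` verts G = degree H ` verts H"
    unfolding im[symmetric] image_image using dg by (auto simp: image_iff)
  then have md: "min_degree G = min_degree H" unfolding min_degree_def by simp
  have "{v \<in> verts G. degree G v = min_degree G} = f ` {v \<in> verts H. degree H v = min_degree H}"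
    unfolding md im[symmetric] using dg by auto
  moreover have "inj_on f {v \<in> verts H. degree H v = min_degree H}" by (rule inj_on_subset[OF inj]) auto
  ultimately have "nu G = nu H" unfolding nu_def by (simp add: card_image)
  moreover have "card (verts G) = card (verts H)" using bij_betw_same_card[OF bij] by simp
  ultimately show ?thesis by simp
qed

lemma nu_H:
  assumes "constr H j t p s"
  shows "nu H = card (verts H) - p"
proof -
  have I: "simple_graph H" "card (verts H) = 2*j+4+2*t+p+s" "\<forall>v\<in>verts H. degree H v \<ge> 3"
    "card (high H) = p" "p \<le> j+1" using inv[OF assms] by auto
  have fV: "finite (verts H)" using I(1) simple_graph_def by blast
  have hs: "high H \<subseteq> verts H" unfolding high_def by auto
  have "high H \<noteq> verts H" using I(2,4,5) by auto
  then obtain v where v: "v \<in> verts H" "degree H v = 3" using hs unfolding high_def by blast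
  have "min_degree H = 3" unfolding min_degree_def
  proof (rule antisym)
    show "Min (degree H ` verts H) \<le> 3" using v fV by (metis Min_le finite_imageI image_eqI)
    show "3 \<le> Min (degree H ` verts H)" using v fV I(3) by (subst Min_ge_iff) auto
  qed
  then have "{v \<in> verts H. degree H v = min_degree H} = verts H - high H" unfolding high_def by auto
  then show ?thesis unfolding nu_def using I(4) fV hs by (simp add: card_Diff_subset finite_subset)
qed



lemma arith_part:
  fixes n k j t p s :: nat and l :: int
  assumes A: "n = 2*j+4+2*t+p+s" "p \<le> j+1" "3*(n-p) < 2*n+5" "2*n+2 \<le> 3*(n-p)"
    "int n = 3 * int k + l" "n \<ge> 5" "k \<noteq> 1" "l \<in> {-1, 0, 1}"
  shows "p = k - 1
    \<and> (l = -1 \<longrightarrow> j = k - 2 \<and> t = 0 \<and> s = 0)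
    \<and> (l = 0 \<longrightarrow> j = k - 2 \<and> t = 0 \<and> s = 1)
    \<and> (l = 1 \<longrightarrow> (j = k - 1 \<and> t = 0 \<and> s = 0) \<or> (j = k - 2 \<and> t = 1 \<and> s = 0)
                   \<or> (j = k - 2 \<and> t = 0 \<and> s = 2))"
proof -
  have pn: "p \<le> n" using A(1) by simp
  have i1: "3 * int n - 3 * int p < 2 * int n + 5" "2 * int n + 2 \<le> 3 * int n - 3 * int p"
    using A(3,4) pn by (simp_all add: of_nat_diff[symmetric])
  have kp: "k = p + 1"
  proof -
    have "int k = int p + 1" using i1 A(5,8) by auto
    then show ?thesis by simp
  qed
  have L: "l = -1 \<or> l = 0 \<or> l = 1" using A(8) by auto
  have c1: "j = k - 2 \<and> t = 0 \<and> s = 0" if "l = -1"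
  proof -
    have "n = 3*p + 2" using A(5) kp that by linarith
    then show ?thesis using A(1,2) kp by linarith
  qed
  have c2: "j = k - 2 \<and> t = 0 \<and> s = 1" if "l = 0"
  proof -
    have e: "n = 3*p + 3" using A(5) kp that by linarith
    then have "t = 0" "s \<le> 1" using A(1,2) by linarith+
    moreover have "s \<noteq> 0"
    proof
      assume "s = 0"
      then have "2*p = 2*j + 1 + 2*t" using e A(1) by linarith
      then show False by presburger
    qed
    ultimately show ?thesis using e A(1,2) kp by linarith
  qed
  have c3: "(j = k - 1 \<and> t = 0 \<and> s = 0) \<or> (j = k - 2 \<and> t = 1 \<and> s = 0)
                   \<or> (j = k - 2 \<and> t = 0 \<and> s = 2)" if "l = 1"
  proof -
    have e: "n = 3*p + 4" using A(5) kp that by linarith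
    then have "2*t + s \<le> 2" using A(1,2) by linarith
    moreover have "s \<noteq> 1"
    proof
      assume "s = 1"
      then have "2*p = 2*j + 1 + 2*t" using e A(1) by linarith
      then show False by presburger
    qed
    ultimately have "(t = 0 \<and> s = 0) \<or> (t = 1 \<and> s = 0) \<or> (t = 0 \<and> s = 2)" by linarith
    then show ?thesis using e A(1,2) kp by linarith
  qed
  show ?thesis using c1 c2 c3 kp by simp
qed

theorem theorem16:
  fixes G :: "'a graph" and H :: "nat graph"
    and n k j t p s :: nat and l :: int
  assumes "simple_graph G"
    and "uniformly_connected 3 G"
    and "extremal G"
    and "n = card (verts G)"
    and "int n = 3 * int k + l"
    and "n \<ge> 5"
    and "k \<noteq> 1"
    and "l \<in> {-1, 0, 1}"
    and "constr H j t p s"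
    and "graph_iso H G"
  shows "p = k - 1
    \<and> (l = -1 \<longrightarrow> j = k - 2 \<and> t = 0 \<and> s = 0)
    \<and> (l = 0 \<longrightarrow> j = k - 2 \<and> t = 0 \<and> s = 1)
    \<and> (l = 1 \<longrightarrow> (j = k - 1 \<and> t = 0 \<and> s = 0) \<or> (j = k - 2 \<and> t = 1 \<and> s = 0)
                   \<or> (j = k - 2 \<and> t = 0 \<and> s = 2))"
proof -
  have I: "card (verts H) = 2*j+4+2*t+p+s" "p \<le> j+1" using inv[OF assms(9)] by auto
  have nH: "nu H = card (verts H) - p" using nu_H[OF assms(9)] .
  have iso: "nu G = nu H" "card (verts G) = card (verts H)" using iso_nu[OF assms(10)] by auto
  have nv: "n = 2*j+4+2*t+p+s" using I(1) iso(2) assms(4) by simp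
  have pn: "p \<le> n" using nv by simp
  have ex: "int (n - p) = \<lceil>(2 * real n + 2) / 3\<rceil>"
    using assms(3,4) iso nH unfolding extremal_def by simp
  then have "real_of_int (int (n - p)) - 1 < (2 * real n + 2) / 3 \<and> (2 * real n + 2) / 3 \<le> real_of_int (int (n - p))"
    using ceiling_eq_iff by metis
  then have r: "real (n - p) - 1 < (2 * real n + 2) / 3" "(2 * real n + 2) / 3 \<le> real (n - p)" by simp_all
  have "3 * real (n - p) < 2 * real n + 5" using r(1) by (simp add: field_simps)
  then have a1: "3*(n-p) < 2*n+5" by (simp only: of_nat_less_iff[symmetric])
  have "2 * real n + 2 \<le> 3 * real (n - p)" using r(2) by (simp add: field_simps)
  then have a2: "2*n+2 \<le> 3*(n-p)" by (simp only: of_nat_le_iff[symmetric])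
  show ?thesis using arith_part[OF nv I(2) a1 a2 assms(5-8)] .
qed

end
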